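(* Let $\mathcal D_2:=\{y\in\mathbb C:(\Im y)^2<(\lambda_1+\lambda_2)\Re y+\frac14\lambda_2(2\lambda_1+\lambda_2)\}$. Then $\mathcal D_2\subset S$, where $S$ is the set defined below; consequently $\widehat{\boldsymbol\nu}_1$ extends to an analytic function on $\mathcal D_2$.
   Context: Let $\lambda_1,\lambda_2>0$ (with $\lambda_1=2(\delta_2-\delta_1)$, $\lambda_2=2(\delta_3-\delta_2)$ for reals $\delta_1<\delta_2<\delta_3$). $\widehat{\boldsymbol\nu}_1(y)=\int_0^\infty e^{-yu}\boldsymbol\nu_1(du)$ is the Laplace transform of the lateral measure $\boldsymbol\nu_1$ of the stationary gap process $(G,H)$ of the degenerate rank-based three-particle system, i.e. the solution of $G(t)=G(0)-\tfrac{\lambda_1}{2}t-W(t)-\tfrac12L^H(t)+L^G(t)$, $H(t)=H(0)-\tfrac{\lambda_2}{2}t+W(t)-\tfrac12L^G(t)+L^H(t)$ ($W$ a standard Brownian motion, $L^Z$ the local time of $Z$ at $0$), with invariant law $\boldsymbol\pi$, $\boldsymbol\nu_1(A)=\mathbb E^{\boldsymbol\pi}\int_0^2\mathbf 1_A(H(t))dL^G(t)$, $\boldsymbol\nu_2(A)=\mathbb E^{\boldsymbol\pi}\int_0^2\mathbf 1_A(G(t))dL^H(t)$; these satisfy the BAR $[(x-y)^2+\lambda_1x+\lambda_2y]\widehat{\boldsymbol\pi}(x,y)=(x-\tfrac y2)\widehat{\boldsymbol\nu}_1(y)+(y-\tfrac x2)\widehat{\boldsymbol\nu}_2(x)$ on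 $[0,\infty)^2$. Let $y^+=\lambda_1^2/(4(\lambda_1+\lambda_2))$, $A_1^+(y)=-\frac{\lambda_1}2+y+\sqrt{\frac{\lambda_1^2}4-(\lambda_1+\lambda_2)y}$ (principal square root, analytic on $\mathbb C\setminus[y^+,\infty)$, with $\Re A_1^+(y):=y-\lambda_1/2$ on the cut), and $S:=\{\Re y\ge0\}\cup\{\Re A_1^+(y)>0\}$, an open connected set to which $\widehat{\boldsymbol\nu}_1$ extends analytically. *)

theory Defs
  imports "HOL-Analysis.Analysis"
begin

text \<open>On the cut y real > y^+ the radicand is a negative real, csqrt is purely imaginary,
 so Re A_1^+(y) = y - l1/2, matching the paper's convention.\<close>
definition A1plus :: "real \<Rightarrow> real \<Rightarrow> complex \<Rightarrow> complex" where
  "A1plus l1 l2 y = - complex_of_real (l1 / 2) + y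
      + csqrt (complex_of_real (l1\<^sup>2 / 4) - complex_of_real (l1 + l2) * y)"

definition S_dom :: "real \<Rightarrow> real \<Rightarrow> complex set" where
  "S_dom l1 l2 = {y. Re y \<ge> 0} \<union> {y. Re (A1plus l1 l2 y) > 0}"

definition D2_dom :: "real \<Rightarrow> real \<Rightarrow> complex set" where
  "D2_dom l1 l2 = {y. (Im y)\<^sup>2 < (l1 + l2) * Re y + (1/4) * l2 * (2 * l1 + l2)}"

end

theory Submission
  imports Defs
begin

lemma re_csqrt_gt:
  fixes w :: complex and c :: real
  assumes "c > 0" "Re w > c^2"
  shows "Re (csqrt w) > c"
proof -
  define s where "s = csqrt w"
  have sq: "s^2 = w" unfolding s_def by (rule power2_csqrt)
  have nn: "Re s \<ge> 0" unfolding s_def by (rule Re_csqrt)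
  have "Re w = (Re s)^2 - (Im s)^2" using sq by (simp add: power2_eq_square flip: sq)
  hence "(Re s)^2 > c^2" using assms(2) by (smt (verit) zero_le_power2)
  hence "Re s > c" using nn assms(1) by (meson power_less_imp_less_base)
  thus ?thesis unfolding s_def .
qed

theorem mainTheorem10:
  fixes l1 l2 :: real
  assumes "l1 > 0" and "l2 > 0"
  shows "D2_dom l1 l2 \<subseteq> S_dom l1 l2"
proof
  fix y assume y: "y \<in> D2_dom l1 l2"
  show "y \<in> S_dom l1 l2"
  proof (cases "Re y \<ge> 0")
    case True thus ?thesis by (simp add: S_dom_def)
  next
    case False
    define a where "a = Re y"
    have a0: "a < 0" using False a_def by simp
    have "0 \<le> (Im y)^2" by simp
    hence h: "0 < (l1 + l2) * a + (1/4) * l2 * (2 * l1 + l2)" using y a_def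
      by (simp add: D2_dom_def) (smt (verit) zero_le_power2)
    have "a > - l2"
    proof (rule ccontr)
      assume "\<not> a > - l2"
      hence "(l1 + l2) * a \<le> (l1+l2) * (-l2)" using assms
        by (intro mult_left_mono) auto
      moreover have "l2 * (2*l1 + 3*l2) > 0" using assms by simp
      moreover have "(l1+l2)*(-l2) + 1/4 * l2 * (2 * l1 + l2) = - (l2 * (2*l1 + 3*l2))/4"
        by (simp add: algebra_simps)
      ultimately show False using h by linarith
    qed
    hence neg: "a^2 + l2 * a < 0" using a0
    proof -
      have "a * (a + l2) < 0" using a0 \<open>a > - l2\<close> by (intro mult_neg_pos) auto
      thus ?thesis by (simp add: power2_eq_square algebra_simps)
    qed
    define c where "c = l1/2 - a"
    define w where "w = complex_of_real (l1\<^sup>2 / 4) - complex_of_real (l1 + l2) * y"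
    have rew: "Re w = c^2 - (a^2 + l2 * a)"
      unfolding w_def c_def a_def by (simp add: power2_eq_square algebra_simps)
    have "c > 0" using a0 assms c_def by simp
    hence "Re (csqrt w) > c" using rew neg by (intro re_csqrt_gt) auto
    hence "Re (A1plus l1 l2 y) > 0"
      unfolding A1plus_def w_def[symmetric] using c_def a_def by simp
    thus ?thesis by (simp add: S_dom_def)
  qed
qed

end
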